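(* Consider a pairing heap built by an arbitrary sequence of the operations make-heap, insert, get-min, decrease-key and delete-min, starting from an empty heap, and let $n$ be its current number of elements and $N$ its current sticky size. Then the potential $\Phi$ of the heap is $O(N) = O(n)$, with the hidden constant independent of the heap and of the operation history.
   Context: A pairing heap is a heap-ordered rooted ordered tree (the "general view"): each node stores a key, has zero or more children ordered from left to right, and every child has a strictly larger key than its parent. It is stored in the "binary view" via the leftmost-child/right-sibling correspondence: the left child of $x$ in the binary view is the leftmost child of $x$ in the general view, and the right child of $x$ in the binary view is the next sibling to the right of $x$ in the general view. Pairing two heap-ordered trees makes the root with the larger key the leftmost child of the other root. Operations: make-heap returns an empty heap; get-min returns the root key; insert creates a new node, which becomes the root if the heap is empty and otherwise is paired with the root; decrease-key$(p,y)$ (with $y$ strictly less than the current key of the node $p$) sets the key to $y$ and, if the node is not the root, detaches it (with its general-view subtree) from its parent and pairs it with the root; delete-min removes the root, then (first pass) pairs the root's former children in consecutive pairs from left to right, then (second pass) repeatedly pairs the two rightmost remaining trees until one tree remains. Sticky size: $N$ is initially $1$; after every heap operation, if $n \ge 2N$ then $N$ is doubled, and if $n \le N/2$ then $N$ is halved, where $n$ is the current number of elements. Let $\lg = \log_2$. For a node $x$, $|x|$ is the number of nodes in the subtree rooted at $x$ in the binary view, and $x_L$, $x_R$ are its left and right children in the binary view (a missing child has size $0$), so $|x| = |x_L|+|x_R|+1$. Node potential $\phi_x$: if $|x_L| > \lg N$ and $|x_R| > \lg N$, $x$ is large and $\phi_x = 400 + 100\lg|x|$; if $|x_L| \le \lg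 N < |x_R|$, $x$ is mixed and $\phi_x = 400 + 100\frac{|x_L|}{\lg N}\lg|x|$ (symmetrically, if $|x_R| \le \lg N < |x_L|$, $x$ is mixed and $\phi_x = 400 + 100\frac{|x_R|}{\lg N}\lg|x|$); if $|x_L|\le \lg N$ and $|x_R| \le \lg N$, $x$ is small and $\phi_x = 0$. Edge potential: an edge of the binary view joining a large node to its right child (in the binary view) that is also large has potential $-7$; all other edges have potential $0$. The potential of the heap is $\Phi = 900|N-n| + \sum_x \phi_x + (\text{sum of edge potentials})$. *)

theory Defs
  imports Complex_Main
begin

text \<open>Binary view of a pairing heap: Node left id key right, where left = leftmost
  child and right = next sibling (general view). Node identities (nat) make
  decrease-key addressable.\<close>

datatype 'a ph = Leaf | Node "'a ph" nat 'a "'a ph"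

fun tsize :: "'a ph \<Rightarrow> nat" where
  "tsize Leaf = 0"
| "tsize (Node l i k r) = tsize l + tsize r + 1"

fun ids :: "'a ph \<Rightarrow> nat set" where
  "ids Leaf = {}"
| "ids (Node l i k r) = insert i (ids l \<union> ids r)"

text \<open>Pairing of two heap-ordered trees given by their roots (root siblings ignored).
  Ties: the second tree becomes the child of the first.\<close>
fun link :: "'a::linorder ph \<Rightarrow> 'a ph \<Rightarrow> 'a ph" where
  "link Leaf t = t"
| "link t Leaf = t"
| "link (Node l1 i1 k1 r1) (Node l2 i2 k2 r2) =
     (if k2 < k1 then Node (Node l1 i1 k1 l2) i2 k2 Leaf
      else Node (Node l2 i2 k2 l1) i1 k1 Leaf)"

text \<open>List of the general-view trees along a right spine (children, left to right).\<close>
fun spine :: "'a ph \<Rightarrow> 'a ph list" where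
  "spine Leaf = []"
| "spine (Node a i k r) = Node a i k Leaf # spine r"

fun pass1 :: "'a::linorder ph list \<Rightarrow> 'a ph list" where
  "pass1 (a # b # rest) = link a b # pass1 rest"
| "pass1 ts = ts"

fun pass2 :: "'a::linorder ph list \<Rightarrow> 'a ph" where
  "pass2 [] = Leaf"
| "pass2 [t] = t"
| "pass2 (t # ts) = link t (pass2 ts)"

fun delete_min :: "'a::linorder ph \<Rightarrow> 'a ph" where
  "delete_min Leaf = Leaf"
| "delete_min (Node l i k r) = pass2 (pass1 (spine l))"

fun insert_node :: "nat \<Rightarrow> 'a::linorder \<Rightarrow> 'a ph \<Rightarrow> 'a ph" where
  "insert_node i x Leaf = Node Leaf i x Leaf"
| "insert_node i x t = link t (Node Leaf i x Leaf)"

fun lookup :: "nat \<Rightarrow> 'a ph \<Rightarrow> ('a ph \<times> 'a) option" where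
  "lookup p Leaf = None"
| "lookup p (Node l i k r) =
     (if i = p then Some (l, k)
      else (case lookup p l of Some v \<Rightarrow> Some v | None \<Rightarrow> lookup p r))"

text \<open>Remove node p together with its general-view subtree: its right sibling takes its place.\<close>
fun cut :: "nat \<Rightarrow> 'a ph \<Rightarrow> 'a ph" where
  "cut p Leaf = Leaf"
| "cut p (Node l i k r) = (if i = p then r else Node (cut p l) i k (cut p r))"

fun decrease_key :: "nat \<Rightarrow> 'a::linorder \<Rightarrow> 'a ph \<Rightarrow> 'a ph" where
  "decrease_key p y Leaf = Leaf"
| "decrease_key p y (Node l i k r) =
     (if i = p then Node l i y r
      else (case lookup p l of
              None \<Rightarrow> Node l i k r
            | Some (a, _) \<Rightarrow> link (Node (cut p l) i k r) (Node a p y Leaf)))"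

text \<open>Sticky size update after an operation (N stays a power of two, at least 1).\<close>
definition sticky_upd :: "nat \<Rightarrow> nat \<Rightarrow> nat" where
  "sticky_upd n N =
     (if n \<ge> 2 * N then 2 * N else if 2 * n \<le> N \<and> N \<ge> 2 then N div 2 else N)"

inductive op_step :: "'a::linorder ph \<times> nat \<Rightarrow> 'a ph \<times> nat \<Rightarrow> bool" where
  ins: "i \<notin> ids t \<Longrightarrow> t' = insert_node i x t \<Longrightarrow>
        op_step (t, N) (t', sticky_upd (tsize t') N)"
| getmin: "op_step (t, N) (t, sticky_upd (tsize t) N)"
| deckey: "lookup p t = Some (a, k) \<Longrightarrow> y < k \<Longrightarrow> t' = decrease_key p y t \<Longrightarrow>
        op_step (t, N) (t', sticky_upd (tsize t') N)"
| delmin: "t \<noteq> Leaf \<Longrightarrow> t' = delete_min t \<Longrightarrow>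
        op_step (t, N) (t', sticky_upd (tsize t') N)"

inductive reachable :: "'a::linorder ph \<times> nat \<Rightarrow> bool" where
  make_heap: "reachable (Leaf, 1)"
| step: "reachable s \<Longrightarrow> op_step s s' \<Longrightarrow> reachable s'"

definition lg :: "real \<Rightarrow> real" where "lg x = log 2 x"

definition node_pot :: "nat \<Rightarrow> nat \<Rightarrow> nat \<Rightarrow> real" where
  "node_pot N a b =
     (let L = lg (real N); s = real (a + b + 1) in
      if real a > L \<and> real b > L then 400 + 100 * lg s
      else if real a \<le> L \<and> L < real b then 400 + 100 * (real a / L) * lg s
      else if real b \<le> L \<and> L < real a then 400 + 100 * (real b / L) * lg s
      else 0)"

definition is_large :: "nat \<Rightarrow> 'a ph \<Rightarrow> bool" where
  "is_large N t = (case t of Leaf \<Rightarrow> False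
     | Node l i k r \<Rightarrow> real (tsize l) > lg (real N) \<and> real (tsize r) > lg (real N))"

fun tree_pot :: "nat \<Rightarrow> 'a ph \<Rightarrow> real" where
  "tree_pot N Leaf = 0"
| "tree_pot N (Node l i k r) =
     node_pot N (tsize l) (tsize r)
     + (if is_large N (Node l i k r) \<and> is_large N r then -7 else 0)
     + tree_pot N l + tree_pot N r"

definition Phi :: "nat \<Rightarrow> 'a ph \<Rightarrow> real" where
  "Phi N t = 900 * \<bar>real N - real (tsize t)\<bar> + tree_pot N t"

end

theory Submission
  imports Defs "HOL-Library.Multiset"
begin

fun mids :: "'a ph \<Rightarrow> nat multiset" where
  "mids Leaf = {#}"
| "mids (Node l i k r) = add_mset i (mids l + mids r)"

lemma set_mids: "set_mset (mids t) = ids t"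
  by (induction t) auto

lemma size_mids: "size (mids t) = tsize t"
  by (induction t) auto

definition rl :: "'a ph \<Rightarrow> bool" where
  "rl t = (case t of Leaf \<Rightarrow> True | Node l i k r \<Rightarrow> r = Leaf)"

lemma link_mids:
  assumes "rl a" "rl b"
  shows "mids (link a b) = mids a + mids b \<and> rl (link a b)"
  using assms by (cases a; cases b) (auto simp: rl_def)

lemma spine_mids: "sum_list (map mids (spine t)) = mids t \<and> (\<forall>x\<in>set (spine t). rl x)"
  by (induction t) (auto simp: rl_def)

lemma pass1_mids: "\<forall>x\<in>set ts. rl x \<Longrightarrow>
   sum_list (map mids (pass1 ts)) = sum_list (map mids ts) \<and> (\<forall>x\<in>set (pass1 ts). rl x)"
  by (induction ts rule: pass1.induct) (auto simp: link_mids)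

lemma pass2_mids: "\<forall>x\<in>set ts. rl x \<Longrightarrow>
   mids (pass2 ts) = sum_list (map mids ts) \<and> rl (pass2 ts)"
proof (induction ts rule: pass2.induct)
  case 1 then show ?case by (simp add: rl_def)
next
  case (2 t) then show ?case by simp
next
  case (3 t v va) then show ?case using link_mids[of t "pass2 (v # va)"] by auto
qed

definition dm :: "nat multiset \<Rightarrow> bool" where
  "dm M = (\<forall>x. count M x \<le> 1)"

lemma dm_sub1: "dm (A + B) \<Longrightarrow> dm A"
  unfolding dm_def by (metis count_union le_add1 le_trans)
lemma dm_sub2: "dm (A + B) \<Longrightarrow> dm B"
  unfolding dm_def by (metis count_union le_add2 le_trans)
lemma dm_sub3: "dm (add_mset x A) \<Longrightarrow> dm A"
  unfolding dm_def by (metis count_add_mset le_SucI le_trans order_refl count_inI)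
lemmas dm_sub = dm_sub1 dm_sub2 dm_sub3

lemma lookup_None: "lookup p t = None \<longleftrightarrow> p \<notin># mids t"
  by (induction t) (auto split: option.splits)

lemma cut_notin: "p \<notin># mids t \<Longrightarrow> cut p t = t"
  by (induction t) auto

lemma lookup_cut:
  "lookup p t = Some (a, k) \<Longrightarrow> dm (mids t) \<Longrightarrow> mids t = mids (cut p t) + mids a + {#p#}"
proof (induction t)
  case Leaf then show ?case by simp
next
  case (Node l i k0 r)
  show ?case
  proof (cases "i = p")
    case True then show ?thesis using Node.prems by auto
  next
    case False
    have d0: "dm (mids l + mids r)" using dm_sub3[of i "mids l + mids r"] Node.prems(2) by simp
    have dl: "dm (mids l)" and dr: "dm (mids r)" using dm_sub1[OF d0] dm_sub2[OF d0] by auto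
    show ?thesis
    proof (cases "lookup p l")
      case None
      then have "p \<notin># mids l" by (simp add: lookup_None)
      then have "cut p l = l" by (rule cut_notin)
      moreover have "lookup p r = Some (a, k)" using Node.prems(1) False None by simp
      ultimately show ?thesis using Node.IH(2) dr False by simp
    next
      case (Some v)
      then have lv: "lookup p l = Some (a, k)" using Node.prems(1) False by simp
      then have pl: "p \<in># mids l" using lookup_None by (metis option.distinct(1))
      have "count (mids l) p + count (mids r) p \<le> 1"
        using spec[OF Node.prems(2)[unfolded dm_def], of p] False by simp
      then have "p \<notin># mids r" using pl not_in_iff[of p "mids r"] count_greater_zero_iff[of "mids l" p] by linarith
      then have "cut p r = r" by (rule cut_notin)
      then show ?thesis using Node.IH(1)[OF lv dl] False by simp
    qed
  qed
qed

definition inv :: "'a ph \<Rightarrow> bool" where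
  "inv t = (rl t \<and> dm (mids t))"

lemma step_inv:
  assumes "op_step (t, N) (t', N')" "inv t"
  shows "inv t' \<and> N' = sticky_upd (tsize t') N \<and>
     (tsize t' = tsize t + 1 \<or> tsize t' = tsize t \<or> tsize t' + 1 = tsize t)"
  using assms(1)
proof cases
  case (ins i x)
  have m: "mids t' = mids t + {#i#} \<and> rl t'"
  proof (cases t)
    case Leaf then show ?thesis using ins by (simp add: rl_def)
  next
    case (Node l j k r)
    then show ?thesis using ins link_mids[of t "Node Leaf i x Leaf"] assms(2)
      by (simp add: rl_def inv_def)
  qed
  have "i \<notin># mids t" using ins set_mids by metis
  then have "dm (mids t')" using m assms(2) unfolding inv_def dm_def
    by (simp add: not_in_iff)
  moreover have "tsize t' = tsize t + 1" using m by (metis size_mids size_add_mset add_mset_add_single add.commute Suc_eq_plus1)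
  ultimately show ?thesis using ins m by (simp add: inv_def)
next
  case getmin then show ?thesis using assms(2) by simp
next
  case (deckey p a k y)
  obtain l i k0 where t: "t = Node l i k0 Leaf"
    using assms(2) deckey unfolding inv_def rl_def by (cases t) auto
  have m: "mids t' = mids t \<and> rl t'"
  proof (cases "i = p")
    case True then show ?thesis using t deckey by (simp add: rl_def)
  next
    case False
    have lk: "lookup p l = Some (a, k)" using deckey t False by (simp split: option.splits)
    have dl: "dm (mids l)" using assms(2) t dm_sub1[of "mids l" "mids Leaf"] dm_sub3[of i "mids l + mids Leaf"] unfolding inv_def by simp
    have e: "mids l = mids (cut p l) + mids a + {#p#}" using lookup_cut[OF lk dl] .
    have t': "t' = link (Node (cut p l) i k0 Leaf) (Node a p y Leaf)"
      using deckey t False lk by simp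
    show ?thesis using link_mids[of "Node (cut p l) i k0 Leaf" "Node a p y Leaf"] t t' e
      by (simp add: rl_def)
  qed
  then show ?thesis using deckey assms(2) by (simp add: inv_def flip: size_mids)
next
  case delmin
  obtain l i k0 where t: "t = Node l i k0 Leaf"
    using assms(2) delmin unfolding inv_def rl_def by (cases t) auto
  have "mids t' = mids l \<and> rl t'"
    using delmin t spine_mids[of l] pass1_mids[of "spine l"] pass2_mids[of "pass1 (spine l)"] by auto
  moreover have "dm (mids l)" using assms(2) t dm_sub1[of "mids l" "mids Leaf"] dm_sub3[of i "mids l + mids Leaf"] unfolding inv_def by simp
  ultimately show ?thesis using delmin t by (simp add: inv_def flip: size_mids)
qed

lemma sticky:
  assumes "1 \<le> N" "n < 2 * N" "N \<le> 2 * n + 1" "n' \<le> n + 1" "n \<le> n' + 1"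
  shows "1 \<le> sticky_upd n' N \<and> n' < 2 * sticky_upd n' N \<and> sticky_upd n' N \<le> 2 * n' + 1"
proof (cases "N \<ge> 2")
  case True
  obtain M where M: "N div 2 = M" by simp
  have d: "M * 2 \<le> N" "N \<le> M * 2 + 1" "1 \<le> M" using M True by linarith+
  show ?thesis using assms d True unfolding sticky_upd_def M by (auto split: if_split; use d in linarith)
next
  case False
  then show ?thesis using assms unfolding sticky_upd_def by (auto split: if_split)
qed

lemma reach_inv:
  "reachable s \<Longrightarrow> inv (fst s) \<and> 1 \<le> snd s \<and> tsize (fst s) < 2 * snd s \<and> snd s \<le> 2 * tsize (fst s) + 1"
proof (induction rule: reachable.induct)
  case make_heap then show ?case by (simp add: inv_def rl_def dm_def)
next
  case (step s s')
  obtain t N t' N' where s: "s = (t, N)" "s' = (t', N')" by (cases s, cases s')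
  have h: "inv t' \<and> N' = sticky_upd (tsize t') N \<and>
     (tsize t' = tsize t + 1 \<or> tsize t' = tsize t \<or> tsize t' + 1 = tsize t)"
    using step_inv step s by auto
  have "1 \<le> N" "tsize t < 2 * N" "N \<le> 2 * tsize t + 1" using step s by auto
  then show ?case using h sticky[of N "tsize t" "tsize t'"] s by auto
qed

lemma lg_nonneg: "1 \<le> N \<Longrightarrow> 0 \<le> lg (real N)"
  unfolding lg_def by simp

lemma lg_ge1: "2 \<le> N \<Longrightarrow> 1 \<le> lg (real N)"
proof -
  assume "2 \<le> N"
  then have "log 2 2 \<le> log 2 (real N)" by (subst log_le_cancel_iff) auto
  then show ?thesis unfolding lg_def by simp
qed

lemma lg_s: "1 \<le> s \<Longrightarrow> s \<le> 2 * N \<Longrightarrow> lg (real s) \<le> lg (real N) + 1"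
proof -
  assume a: "1 \<le> s" "s \<le> 2 * N"
  then have "log 2 (real s) \<le> log 2 (2 * real N)" by (subst log_le_cancel_iff) auto
  also have "\<dots> = 1 + log 2 (real N)" using a by (subst log_mult) auto
  finally show ?thesis unfolding lg_def by simp
qed

lemma np0: "0 \<le> lg (real N) \<Longrightarrow> real a \<le> lg (real N) \<Longrightarrow> real b \<le> lg (real N) \<Longrightarrow> node_pot N a b = 0"
  unfolding node_pot_def Let_def by auto

lemma np_nonneg: "0 \<le> lg (real N) \<Longrightarrow> 0 \<le> node_pot N a b"
  unfolding node_pot_def Let_def lg_def by auto

lemma mixed_aux:
  fixes x L g :: real
  assumes "1 \<le> L" "0 \<le> x" "g \<le> L + 1"
  shows "(x / L) * g \<le> 2 * x"
proof -
  have "(x / L) * g \<le> (x / L) * (L + 1)" using assms by (intro mult_left_mono) auto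
  also have "\<dots> = x + x / L" using assms by (simp add: field_simps)
  also have "x / L \<le> x" using assms by (simp add: divide_le_eq mult_le_cancel_left1)
  finally show ?thesis by simp
qed

lemma np_mixed1: "1 \<le> lg (real N) \<Longrightarrow> lg (real (a + b + 1)) \<le> lg (real N) + 1 \<Longrightarrow>
   real a \<le> lg (real N) \<Longrightarrow> lg (real N) < real b \<Longrightarrow> node_pot N a b \<le> 400 + 200 * real a"
  unfolding node_pot_def Let_def
  using mixed_aux[of "lg (real N)" "real a" "lg (real (a + b + 1))"] by auto

lemma np_mixed2: "1 \<le> lg (real N) \<Longrightarrow> lg (real (a + b + 1)) \<le> lg (real N) + 1 \<Longrightarrow>
   real b \<le> lg (real N) \<Longrightarrow> lg (real N) < real a \<Longrightarrow> node_pot N a b \<le> 400 + 200 * real b"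
  unfolding node_pot_def Let_def
  using mixed_aux[of "lg (real N)" "real b" "lg (real (a + b + 1))"] by auto

lemma np_large: "lg (real (a + b + 1)) \<le> lg (real N) + 1 \<Longrightarrow>
   lg (real N) < real a \<Longrightarrow> lg (real N) < real b \<Longrightarrow> node_pot N a b \<le> 500 + 100 * lg (real N)"
  unfolding node_pot_def Let_def by auto

fun gp :: "nat \<Rightarrow> 'a ph \<Rightarrow> real" where
  "gp N Leaf = 0"
| "gp N (Node l i k r) = node_pot N (tsize l) (tsize r) + 7 + gp N l + gp N r"

lemma tp_gp: "1 \<le> N \<Longrightarrow> \<bar>tree_pot N t\<bar> \<le> gp N t"
proof (induction t)
  case Leaf then show ?case by simp
next
  case (Node l i k r)
  have "0 \<le> node_pot N (tsize l) (tsize r)" using np_nonneg lg_nonneg Node.prems by blast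
  then show ?case using Node by (simp split: if_split; arith)
qed

lemma gp_bound: "2 \<le> N \<Longrightarrow> tsize t \<le> 2 * N \<Longrightarrow>
  gp N t \<le> (if real (tsize t) \<le> lg (real N) then 7 * real (tsize t)
            else 1000 * real (tsize t) - (100 * lg (real N) + 507))"
proof (induction t)
  case Leaf then show ?case using lg_ge1[of N] by simp
next
  case (Node l i k r)
  define a where "a = tsize l"
  define b where "b = tsize r"
  define L where "L = lg (real N)"
  have L1: "1 \<le> L" using lg_ge1 Node.prems unfolding L_def by blast
  have s: "lg (real (a + b + 1)) \<le> L + 1" using lg_s[of "a + b + 1" N] Node.prems
    unfolding L_def a_def b_def by simp
  have IHl: "gp N l \<le> (if real a \<le> L then 7 * real a else 1000 * real a - (100 * L + 507))"
    using Node.IH(1) Node.prems unfolding a_def L_def by simp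
  have IHr: "gp N r \<le> (if real b \<le> L then 7 * real b else 1000 * real b - (100 * L + 507))"
    using Node.IH(2) Node.prems unfolding b_def L_def by simp
  have g: "gp N (Node l i k r) = node_pot N a b + 7 + gp N l + gp N r"
    unfolding a_def b_def by simp
  have ts: "real (tsize (Node l i k r)) = real a + real b + 1" unfolding a_def b_def by simp
  show ?case
  proof (cases "real a \<le> L")
    case A: True
    show ?thesis
    proof (cases "real b \<le> L")
      case True
      have "node_pot N a b = 0" using np0 A True L1 unfolding L_def by simp
      then show ?thesis using g ts IHl IHr A True L1 unfolding L_def[symmetric] by auto
    next
      case False
      have "node_pot N a b \<le> 400 + 200 * real a" using np_mixed1[of N a b] A False L1 s unfolding L_def by simp
      then show ?thesis using g ts IHl IHr A False L1 unfolding L_def[symmetric] by auto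
    qed
  next
    case A: False
    show ?thesis
    proof (cases "real b \<le> L")
      case True
      have "node_pot N a b \<le> 400 + 200 * real b" using np_mixed2[of N a b] A True L1 s unfolding L_def by simp
      then show ?thesis using g ts IHl IHr A True L1 unfolding L_def[symmetric] by auto
    next
      case False
      have "node_pot N a b \<le> 500 + 100 * L" using np_large[of a b N] A False s unfolding L_def by simp
      then show ?thesis using g ts IHl IHr A False L1 unfolding L_def[symmetric] by auto
    qed
  qed
qed


lemma gp_le: "reachable (t, N) \<Longrightarrow> gp N t \<le> 1000 * real (tsize t)"
proof -
  assume r: "reachable (t, N)"
  have iv: "1 \<le> N" "tsize t < 2 * N" using reach_inv[OF r] by auto
  show ?thesis
  proof (cases "2 \<le> N")
    case True
    have "gp N t \<le> (if real (tsize t) \<le> lg (real N) then 7 * real (tsize t)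
            else 1000 * real (tsize t) - (100 * lg (real N) + 507))"
      by (rule gp_bound[OF True]) (use iv in simp)
    moreover have "0 \<le> lg (real N)" using lg_nonneg iv by blast
    ultimately show ?thesis by (simp split: if_splits)
  next
    case False
    then have N1: "N = 1" using iv by simp
    then have "tsize t \<le> 1" using iv by simp
    then show ?thesis
    proof (cases t)
      case Leaf then show ?thesis by simp
    next
      case (Node l i k r)
      then have "l = Leaf" "r = Leaf" using \<open>tsize t \<le> 1\<close> by (cases l; cases r; simp)+
      then show ?thesis using Node N1 np0[of 1 0 0] by (simp add: lg_def)
    qed
  qed
qed

theorem lemma1:
  "\<exists>c::real. \<forall>(t :: 'a::linorder ph) N. reachable (t, N) \<longrightarrow>
      \<bar>Phi N t\<bar> \<le> c * real N \<and> (tsize t \<ge> 1 \<longrightarrow> \<bar>Phi N t\<bar> \<le> c * real (tsize t))"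
proof (intro exI allI impI)
  fix t :: "'a::linorder ph" and N
  assume r: "reachable (t, N)"
  have iv: "1 \<le> N" "tsize t < 2 * N" "N \<le> 2 * tsize t + 1" using reach_inv[OF r] by auto
  have g: "\<bar>tree_pot N t\<bar> \<le> 1000 * real (tsize t)" using tp_gp[OF iv(1), of t] gp_le[OF r] by linarith
  have iv': "1 \<le> real N" "real (tsize t) < 2 * real N" "real N \<le> 2 * real (tsize t) + 1"
    using iv by linarith+
  have ph: "\<bar>Phi N t\<bar> \<le> 900 * \<bar>real N - real (tsize t)\<bar> + 1000 * real (tsize t)"
  proof -
    have "\<bar>Phi N t\<bar> \<le> \<bar>900 * \<bar>real N - real (tsize t)\<bar>\<bar> + \<bar>tree_pot N t\<bar>"
      unfolding Phi_def by (rule abs_triangle_ineq)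
    then show ?thesis using g by simp
  qed
  show "\<bar>Phi N t\<bar> \<le> 5000 * real N \<and> (tsize t \<ge> 1 \<longrightarrow> \<bar>Phi N t\<bar> \<le> 5000 * real (tsize t))"
  proof -
    have a: "\<bar>real N - real (tsize t)\<bar> \<le> real N + real (tsize t)" by (simp add: abs_le_iff)
    have c: "\<bar>Phi N t\<bar> \<le> 900 * (real N + real (tsize t)) + 1000 * real (tsize t)"
      using ph mult_left_mono[OF a, of 900] by simp
    have b1: "\<bar>Phi N t\<bar> \<le> 5000 * real N" using c iv' by simp
    have b2: "tsize t \<ge> 1 \<longrightarrow> \<bar>Phi N t\<bar> \<le> 5000 * real (tsize t)"
    proof
      assume "tsize t \<ge> 1"
      then have "real (tsize t) \<ge> 1" by simp
      then show "\<bar>Phi N t\<bar> \<le> 5000 * real (tsize t)" using c iv' by simp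
    qed
    show ?thesis using b1 b2 by blast
  qed
qed

end
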